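(* Let $M$ be an irreducible $\mathcal D_{K}$-module, $K=k((z))$, $k$ algebraically closed, with $\mathrm{slope}(M)>0$, realized as $M=k((z^{1/r}))$ with derivation $\partial_z=d/dz+f(z)$, where $f(z)=Cz^{-\mathrm{slope}(M)-1}+\dots\in k((z^{1/r}))$, $C\ne0$. Let $P=\frac1C\partial_z$, and for $\alpha,\gamma\in k$ let $P^\alpha:z^\gamma k((z^{1/r}))\to z^{\gamma-(1+\mathrm{slope}(M))\alpha}k((z^{1/r}))$ be the complex powers (defined by polynomial interpolation in $\alpha$ of the coefficients of the integer powers $P^\alpha$). Then for every $\alpha\in k$: (1) $P^\alpha$ is invertible (with inverse $P^{-\alpha}$); (2) $P^\alpha\partial_z=\partial_zP^\alpha$; (3) $P^\alpha z=zP^\alpha+\frac{\alpha}{C}P^{\alpha-1}$.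
   Context: $k$ has characteristic zero. $z^\gamma k((z^{1/r}))$ denotes the space of series $\sum_{i\ge -N}c_{\gamma+i/r}z^{\gamma+i/r}$, a one-dimensional $k((z^{1/r}))$-vector space, on which $d/dz$ acts termwise and $\partial_z=d/dz+f$ acts; it depends on $\gamma$ only mod $\frac1r\mathbb Z$. For integer $\alpha\ge0$, $P^\alpha(z^\beta)=\sum_{i\ge0}p_i(\alpha,\beta)z^{\beta-(1+\mathrm{slope}M)\alpha+i/r}$ with $p_0=1$ and coefficients $p_i(\alpha,\beta)$ polynomial in $(\alpha,\beta)$; $P^\alpha$ for arbitrary $\alpha\in k$ is defined by the same formula using these polynomials. *)

theory Defs
  imports "HOL-Computational_Algebra.Polynomial"
begin

text \<open>A series in z^gamma k((z^(1/r))) is represented by its coefficient function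
  (exponent in k  to coefficient in k), supported on gamma + (1/r) Z and bounded below.\<close>

definition in_space :: "nat \<Rightarrow> 'k::field_char_0 \<Rightarrow> ('k \<Rightarrow> 'k) \<Rightarrow> bool" where
  "in_space r \<gamma> c \<longleftrightarrow> (\<exists>N::int. \<forall>e. c e \<noteq> 0 \<longrightarrow>
      (\<exists>i::int. i \<ge> - N \<and> e = \<gamma> + of_int i / of_nat r))"

definition space :: "nat \<Rightarrow> 'k::field_char_0 \<Rightarrow> ('k \<Rightarrow> 'k) set" where
  "space r \<gamma> = {c. in_space r \<gamma> c}"

definition ddz :: "('k::field_char_0 \<Rightarrow> 'k) \<Rightarrow> 'k \<Rightarrow> 'k" where
  "ddz c = (\<lambda>e. (e + 1) * c (e + 1))"

text \<open>product of two series (Cauchy product; finite sums for series bounded below)\<close>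
definition smul :: "('k::field_char_0 \<Rightarrow> 'k) \<Rightarrow> ('k \<Rightarrow> 'k) \<Rightarrow> 'k \<Rightarrow> 'k" where
  "smul g c = (\<lambda>e. \<Sum>x | g x \<noteq> 0 \<and> c (e - x) \<noteq> 0. g x * c (e - x))"

definition mulz :: "('k::field_char_0 \<Rightarrow> 'k) \<Rightarrow> 'k \<Rightarrow> 'k" where
  "mulz c = (\<lambda>e. c (e - 1))"

definition dop :: "('k::field_char_0 \<Rightarrow> 'k) \<Rightarrow> ('k \<Rightarrow> 'k) \<Rightarrow> 'k \<Rightarrow> 'k" where
  "dop f c = (\<lambda>e. ddz c e + smul f c e)"

definition Pop :: "'k::field_char_0 \<Rightarrow> ('k \<Rightarrow> 'k) \<Rightarrow> ('k \<Rightarrow> 'k) \<Rightarrow> 'k \<Rightarrow> 'k" where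
  "Pop C f c = (\<lambda>e. dop f c e / C)"

definition mono :: "'k::field_char_0 \<Rightarrow> 'k \<Rightarrow> 'k" where
  "mono \<beta> = (\<lambda>e. if e = \<beta> then 1 else 0)"

definition slope :: "nat \<Rightarrow> nat \<Rightarrow> 'k::field_char_0" where
  "slope r m = of_nat m / of_nat r"

definition pnat :: "nat \<Rightarrow> nat \<Rightarrow> 'k::field_char_0 \<Rightarrow> ('k \<Rightarrow> 'k) \<Rightarrow> nat \<Rightarrow> nat \<Rightarrow> 'k \<Rightarrow> 'k" where
  "pnat r m C f i n \<beta> =
     ((Pop C f ^^ n) (mono \<beta>)) (\<beta> - (1 + slope r m) * of_nat n + of_nat i / of_nat r)"

definition pcoef :: "nat \<Rightarrow> nat \<Rightarrow> 'k::field_char_0 \<Rightarrow> ('k \<Rightarrow> 'k) \<Rightarrow> nat \<Rightarrow> 'k \<Rightarrow> 'k \<Rightarrow> 'k" where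
  "pcoef r m C f i \<alpha> \<beta> =
     poly (THE q. \<forall>n::nat. poly q (of_nat n) = pnat r m C f i n \<beta>) \<alpha>"

text \<open>P^alpha applied to a series: P^alpha(sum c_beta z^beta) = sum c_beta P^alpha(z^beta),
  with P^alpha(z^beta) = sum_i p_i(alpha,beta) z^(beta - (1+slope) alpha + i/r)\<close>
definition Ppow :: "nat \<Rightarrow> nat \<Rightarrow> 'k::field_char_0 \<Rightarrow> ('k \<Rightarrow> 'k) \<Rightarrow> 'k \<Rightarrow> ('k \<Rightarrow> 'k) \<Rightarrow> 'k \<Rightarrow> 'k" where
  "Ppow r m C f \<alpha> c = (\<lambda>e. \<Sum>\<beta> | c \<beta> \<noteq> 0 \<and>
        (\<exists>i::nat. e = \<beta> - (1 + slope r m) * \<alpha> + of_nat i / of_nat r).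
      c \<beta> * pcoef r m C f
        (THE i::nat. e = \<beta> - (1 + slope r m) * \<alpha> + of_nat i / of_nat r) \<alpha> \<beta>)"

text \<open>Irreducibility of M = k((z^(1/r))) with partial_z = d/dz + f as a D_K-module,
  K = k((z)): the only K-subspaces stable under partial_z are 0 and M.\<close>
definition irreducible_DK :: "nat \<Rightarrow> ('k::field_char_0 \<Rightarrow> 'k) \<Rightarrow> bool" where
  "irreducible_DK r f \<longleftrightarrow> (\<forall>S. S \<subseteq> space r 0 \<and> (\<lambda>_. 0) \<in> S \<and>
      (\<forall>a\<in>S. \<forall>b\<in>S. (\<lambda>e. a e + b e) \<in> S) \<and>
      (\<forall>g a. g \<in> space 1 0 \<and> a \<in> S \<longrightarrow> smul g a \<in> S) \<and>
      (\<forall>a\<in>S. dop f a \<in> S)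
    \<longrightarrow> S = {\<lambda>_. 0} \<or> S = space r 0)"

end

theory Submission
  imports Defs
begin


definition bp :: "('a::comm_ring_1 \<Rightarrow> 'a \<Rightarrow> 'a) \<Rightarrow> bool" where
  "bp F \<longleftrightarrow> (\<exists>Q. \<forall>a b. F a b = poly (poly Q [:a:]) b)"

lemma bp_const: "bp (\<lambda>a b. c)"
  unfolding bp_def by (rule exI[of _ "[:[:c:]:]"]) simp

lemma bp_fst: "bp (\<lambda>a b. a)"
  unfolding bp_def by (rule exI[of _ "[:0,1:]"]) simp

lemma bp_snd: "bp (\<lambda>a b. b)"
  unfolding bp_def by (rule exI[of _ "[:[:0,1:]:]"]) simp

lemma bp_add: "bp F \<Longrightarrow> bp G \<Longrightarrow> bp (\<lambda>a b. F a b + G a b)"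
  unfolding bp_def by (metis poly_add)

lemma bp_mult: "bp F \<Longrightarrow> bp G \<Longrightarrow> bp (\<lambda>a b. F a b * G a b)"
  unfolding bp_def by (metis poly_mult)

lemma bp_uminus: "bp F \<Longrightarrow> bp (\<lambda>a b. - F a b)"
  unfolding bp_def by (metis poly_minus)

lemma bp_diff: "bp F \<Longrightarrow> bp G \<Longrightarrow> bp (\<lambda>a b. F a b - G a b)"
  using bp_add[of F "\<lambda>a b. - G a b"] bp_uminus[of G] by simp

lemma bp_divide: "bp F \<Longrightarrow> bp (\<lambda>a b. F a b / (c::'a::field))"
  using bp_mult[OF _ bp_const[of "inverse c"], of F] by (simp add: divide_inverse)

lemma bp_sum: "finite A \<Longrightarrow> (\<And>x. x \<in> A \<Longrightarrow> bp (F x)) \<Longrightarrow> bp (\<lambda>a b. \<Sum>x\<in>A. F x a b)"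
proof (induction A rule: finite_induct)
  case empty then show ?case using bp_const[of 0] by simp
next
  case (insert x A)
  then show ?case using bp_add[of "F x" "\<lambda>a b. \<Sum>x\<in>A. F x a b"] by simp
qed

lemma bp_if: "bp F \<Longrightarrow> bp G \<Longrightarrow> bp (\<lambda>a b. if P then F a b else G a b)"
  by (cases P) simp_all

lemma bp_polyc: "bp G \<Longrightarrow> bp (\<lambda>a b. poly q (G a b))"
proof (induction q)
  case 0 then show ?case using bp_const[of 0] by simp
next
  case (pCons c q)
  then show ?case
    using bp_add[OF bp_const[of c] bp_mult[OF pCons(3) pCons(2)[OF pCons(3)]]] by simp
qed

lemma bp_subst:
  assumes "bp F" "bp G1" "bp G2"
  shows "bp (\<lambda>a b. F (G1 a b) (G2 a b))"
proof -
  obtain Q where Q: "\<And>a b. F a b = poly (poly Q [:a:]) b" using assms(1) unfolding bp_def by blast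
  have "bp (\<lambda>a b. poly (poly Q [:G1 a b:]) (G2 a b))"
  proof (induction Q)
    case 0 then show ?case using bp_const[of 0] by simp
  next
    case (pCons c Q)
    have "bp (\<lambda>a b. poly c (G2 a b) + G1 a b * poly (poly Q [:G1 a b:]) (G2 a b))"
      by (intro bp_add bp_mult bp_polyc assms pCons)
    then show ?case by (simp add: poly_add poly_mult)
  qed
  then show ?thesis by (simp add: Q)
qed

lemma bp_uni_a: "bp F \<Longrightarrow> \<exists>q. \<forall>a. F a b = poly q a"
proof -
  assume "bp F"
  then obtain Q where Q: "\<And>a b. F a b = poly (poly Q [:a:]) b" unfolding bp_def by blast
  have "\<exists>q. \<forall>a. poly (poly Q [:a:]) b = poly q a"
  proof (induction Q)
    case 0 then show ?case by (rule exI[of _ 0]) simp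
  next
    case (pCons c Q)
    then obtain q where q: "\<forall>a. poly (poly Q [:a:]) b = poly q a" by blast
    show ?case by (rule exI[of _ "pCons (poly c b) q"]) (simp add: q[rule_format, symmetric])
  qed
  then show ?thesis by (simp add: Q)
qed

lemma bp_uni_b: "bp F \<Longrightarrow> \<exists>q. \<forall>b. F a b = poly q b"
  unfolding bp_def by blast

lemma upoly_zero:
  fixes q :: "'a::{field_char_0} poly"
  assumes "\<And>n. poly q (of_nat n) = 0"
  shows "q = 0"
proof (rule ccontr)
  assume "q \<noteq> 0"
  then have "finite {x. poly q x = 0}" by (rule poly_roots_finite)
  moreover have "range (of_nat :: nat \<Rightarrow> 'a) \<subseteq> {x. poly q x = 0}" using assms by auto
  ultimately have "finite (range (of_nat :: nat \<Rightarrow> 'a))" by (rule finite_subset[rotated])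
  moreover have "inj (of_nat :: nat \<Rightarrow> 'a)" by (simp add: inj_def)
  ultimately show False using finite_imageD by fastforce
qed

lemma upoly_zero':
  fixes g :: "'a::field_char_0 \<Rightarrow> 'a"
  assumes "\<exists>q. \<forall>x. g x = poly q x" "\<And>n. g (of_nat n) = 0"
  shows "g x = 0"
  using assms upoly_zero by (metis poly_0)

lemma bp_zero:
  fixes F :: "'a::field_char_0 \<Rightarrow> 'a \<Rightarrow> 'a"
  assumes "bp F" "\<And>n k. F (of_nat n) (of_nat k) = 0"
  shows "F a b = 0"
proof -
  have 1: "F (of_nat n) y = 0" for n y
    by (rule upoly_zero'[of "\<lambda>y. F (of_nat n) y"]) (use bp_uni_b[OF assms(1)] assms(2) in auto)
  show ?thesis
    by (rule upoly_zero'[of "\<lambda>x. F x b"]) (use bp_uni_a[OF assms(1)] 1 in auto)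
qed

lemma bp_eq:
  fixes F :: "'a::field_char_0 \<Rightarrow> 'a \<Rightarrow> 'a"
  assumes "bp F" "bp G" "\<And>n k. F (of_nat n) (of_nat k) = G (of_nat n) (of_nat k)"
  shows "F a b = G a b"
  using bp_zero[OF bp_diff[OF assms(1,2)]] assms(3) by simp

lemma faulhaber: "\<exists>q::'a::field_char_0 poly. \<forall>n. poly q (of_nat n) = (\<Sum>k<n. (of_nat k::'a) ^ u)"
proof (induction u rule: less_induct)
  case (less u)
  define qs where "qs t = (SOME q::'a poly. \<forall>n. poly q (of_nat n) = (\<Sum>k<n. (of_nat k::'a) ^ t))" for t
  have qs: "poly (qs t) (of_nat n) = (\<Sum>k<n. of_nat k ^ t)" if "t < u" for t n
    using someI_ex[OF less[OF that]] unfolding qs_def by blast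
  define q where "q = smult (1 / of_nat (Suc u)) (monom 1 (Suc u) - (\<Sum>t<u. smult (of_nat (Suc u choose t)) (qs t)))"
  have key: "(of_nat n::'a) ^ Suc u = (\<Sum>t<u. of_nat (Suc u choose t) * (\<Sum>k<n. of_nat k ^ t)) + of_nat (Suc u) * (\<Sum>k<n. of_nat k ^ u)" for n
  proof -
    have "(of_nat n::'a) ^ Suc u = (\<Sum>k<n. of_nat (Suc k) ^ Suc u - of_nat k ^ Suc u)"
      using sum_lessThan_telescope[of "\<lambda>k. (of_nat k::'a) ^ Suc u" n] by simp
    also have "\<dots> = (\<Sum>k<n. (\<Sum>t<u. of_nat (Suc u choose t) * of_nat k ^ t) + of_nat (Suc u) * of_nat k ^ u)"
    proof (rule sum.cong[OF refl])
      fix k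
      have "(of_nat (Suc k)::'a) ^ Suc u = (of_nat k + 1) ^ Suc u" by (simp add: add.commute)
      also have "\<dots> = (\<Sum>t\<le>Suc u. of_nat (Suc u choose t) * of_nat k ^ t)"
        using binomial_ring[of "of_nat k::'a" 1 "Suc u"] by simp
      also have "\<dots> = (\<Sum>t<u. of_nat (Suc u choose t) * of_nat k ^ t) + of_nat (Suc u) * of_nat k ^ u + of_nat k ^ Suc u"
        by (simp add: lessThan_Suc_atMost[symmetric])
      finally show "(of_nat (Suc k)::'a) ^ Suc u - of_nat k ^ Suc u = (\<Sum>t<u. of_nat (Suc u choose t) * of_nat k ^ t) + of_nat (Suc u) * of_nat k ^ u"
        by simp
    qed
    also have "\<dots> = (\<Sum>t<u. of_nat (Suc u choose t) * (\<Sum>k<n. of_nat k ^ t)) + of_nat (Suc u) * (\<Sum>k<n. of_nat k ^ u)"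
      by (simp add: sum.distrib sum_distrib_left sum.swap[of _ "{..<u}"])
    finally show ?thesis .
  qed
  have "poly q (of_nat n) = (\<Sum>k<n. (of_nat k::'a) ^ u)" for n
  proof -
    have "poly q (of_nat n) = (of_nat n ^ Suc u - (\<Sum>t<u. of_nat (Suc u choose t) * (\<Sum>k<n. of_nat k ^ t))) / of_nat (Suc u)"
      by (simp add: q_def poly_monom poly_sum qs)
    also have "\<dots> = (\<Sum>k<n. (of_nat k::'a) ^ u)"
      unfolding key by (simp del: of_nat_Suc)
    finally show ?thesis .
  qed
  then show ?case by blast
qed

lemma bp_antider:
  fixes g :: "'a::field_char_0 \<Rightarrow> 'a \<Rightarrow> 'a"
  assumes "bp g"
  shows "\<exists>G. bp G \<and> (\<forall>n b. G (of_nat n) b = (\<Sum>k<n. g (of_nat k) b))"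
proof -
  obtain Q where Q: "\<And>a b. g a b = poly (poly Q [:a:]) b" using assms unfolding bp_def by blast
  have "\<forall>u. \<exists>G. bp G \<and> (\<forall>n b. G (of_nat n) b = (\<Sum>k<n. of_nat k ^ u * poly (poly Q [:of_nat k:]) b))"
  proof (induction Q)
    case 0 then show ?case using bp_const[of 0] by (intro allI exI[of _ "\<lambda>a b. 0"]) simp
  next
    case (pCons c Q)
    show ?case
    proof
      fix u
      obtain G where G: "bp G" "\<And>n b. G (of_nat n) b = (\<Sum>k<n. of_nat k ^ Suc u * poly (poly Q [:of_nat k:]) b)"
        using pCons(2) by blast
      obtain q :: "'a poly" where q: "\<And>n. poly q (of_nat n) = (\<Sum>k<n. (of_nat k::'a) ^ u)"
        using faulhaber by blast
      have bpH: "bp (\<lambda>a b. poly q a * poly c b + G a b)"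
        by (intro bp_add bp_mult bp_polyc[OF bp_fst] bp_polyc[OF bp_snd] G(1))
      show "\<exists>G. bp G \<and> (\<forall>n b. G (of_nat n) b = (\<Sum>k<n. of_nat k ^ u * poly (poly (pCons c Q) [:of_nat k:]) b))"
        apply (rule exI[of _ "\<lambda>a b. poly q a * poly c b + G a b"])
        using bpH by (simp add: q G(2) sum_distrib_left sum.distrib poly_add poly_mult algebra_simps)
    qed
  qed
  then obtain G where "bp G" "\<And>n b. G (of_nat n) b = (\<Sum>k<n. of_nat k ^ 0 * poly (poly Q [:of_nat k:]) b)"
    by blast
  then show ?thesis by (intro exI[of _ G]) (simp add: Q)
qed




locale setting =
  fixes r m :: nat and C :: "'k::field_char_0" and f :: "'k \<Rightarrow> 'k"
  assumes r: "r > 0" and mpos: "m > 0"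
    and f_lead: "f (- of_nat (m + r) / of_nat r) = C"
    and f_low: "\<And>e. f e \<noteq> 0 \<Longrightarrow> \<exists>i::int. i \<ge> - int (m + r) \<and> e = of_int i / of_nat r"
    and C: "C \<noteq> 0"
begin

definition rho :: "nat \<Rightarrow> 'k" where "rho i = of_nat i / of_nat r"
definition lam :: 'k where "lam = 1 + slope r m"

definition T :: "'k \<Rightarrow> (nat \<Rightarrow> 'k) \<Rightarrow> 'k \<Rightarrow> 'k" where
  "T g w e = (if \<exists>n. e = g + rho n then w (THE n. e = g + rho n) else 0)"

definition Op :: "'k \<Rightarrow> (nat \<Rightarrow> 'k \<Rightarrow> 'k) \<Rightarrow> ('k \<Rightarrow> 'k) \<Rightarrow> 'k \<Rightarrow> 'k" where
  "Op \<sigma> K c = (\<lambda>e. \<Sum>\<beta> | c \<beta> \<noteq> 0 \<and> (\<exists>i::nat. e = \<beta> - \<sigma> + rho i).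
      c \<beta> * K (THE i::nat. e = \<beta> - \<sigma> + rho i) \<beta>)"

definition conv :: "(nat \<Rightarrow> 'k) \<Rightarrow> (nat \<Rightarrow> 'k \<Rightarrow> 'k) \<Rightarrow> 'k \<Rightarrow> nat \<Rightarrow> 'k" where
  "conv w K g = (\<lambda>t. \<Sum>n\<le>t. w n * K (t - n) (g + rho n))"

definition aa :: "nat \<Rightarrow> 'k \<Rightarrow> 'k" where
  "aa j \<beta> = ((if j = m then \<beta> else 0) + f (rho j - lam)) / C"

lemma r0: "(of_nat r :: 'k) \<noteq> 0" using r by simp

lemma rho_inj[simp]: "rho a = rho b \<longleftrightarrow> a = b"
  using r0 by (simp add: rho_def)

lemma rho_eq0[simp]: "rho n = 0 \<longleftrightarrow> n = 0"
  using r0 by (simp add: rho_def)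

lemma rho_add: "rho (a + b) = rho a + rho b"
  by (simp add: rho_def add_divide_distrib)

lemma rho_sum_eq[simp]: "rho t = rho i + rho n \<longleftrightarrow> t = i + n"
  by (metis rho_add rho_inj)

lemma rho_0[simp]: "rho 0 = 0" by (simp add: rho_def)

lemma lam_rho: "lam = 1 + rho m"
  by (simp add: lam_def slope_def rho_def)

lemma rho_diff: "n \<le> t \<Longrightarrow> rho (t - n) = rho t - rho n"
proof -
  assume "n \<le> t"
  then have "n + (t - n) = t" by simp
  then have "rho t = rho n + rho (t - n)" using rho_add[of n "t - n"] by metis
  then show ?thesis by (simp add: algebra_simps del: rho_sum_eq)
qed

lemma T_at[simp]: "T g w (g + rho n) = w n"
  unfolding T_def by auto

lemma T_out: "(\<And>n. e \<noteq> g + rho n) \<Longrightarrow> T g w e = 0"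
  unfolding T_def by auto

lemma T_cases: obtains n where "e = g + rho n" | "\<And>n. e \<noteq> g + rho n" by blast

lemma T_eqI: "(\<And>t. v t = w t) \<Longrightarrow> T g v = T g w"
  by (metis ext)

lemma T_eqD: "T g v = T g w \<Longrightarrow> v t = w t"
  by (metis T_at)

lemma Op_T: "Op \<sigma> K (T g w) = T (g - \<sigma>) (conv w K g)"
proof
  fix e
  let ?S = "{\<beta>. T g w \<beta> \<noteq> 0 \<and> (\<exists>i::nat. e = \<beta> - \<sigma> + rho i)}"
  let ?h = "\<lambda>\<beta>. T g w \<beta> * K (THE i::nat. e = \<beta> - \<sigma> + rho i) \<beta>"
  show "Op \<sigma> K (T g w) e = T (g - \<sigma>) (conv w K g) e"
  proof (cases "\<exists>t. e = g - \<sigma> + rho t")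
    case True
    then obtain t where t: "e = g - \<sigma> + rho t" by blast
    have sub: "?S \<subseteq> (\<lambda>n. g + rho n) ` {..t}"
    proof
      fix \<beta> assume "\<beta> \<in> ?S"
      then obtain i where nz: "T g w \<beta> \<noteq> 0" and i: "e = \<beta> - \<sigma> + rho i" by blast
      then obtain n where n: "\<beta> = g + rho n" using T_out by blast
      have "rho t = rho (n + i)" using t i n by (simp add: rho_add algebra_simps)
      then have "t = n + i" by simp
      then show "\<beta> \<in> (\<lambda>n. g + rho n) ` {..t}" using n by auto
    qed
    have ex: "\<And>n. n \<le> t \<Longrightarrow> e = g + rho n - \<sigma> + rho (t - n)" by (simp add: t rho_diff)
    have "Op \<sigma> K (T g w) e = sum ?h ?S" by (simp add: Op_def)
    also have "\<dots> = sum ?h ((\<lambda>n. g + rho n) ` {..t})"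
      by (rule sum.mono_neutral_left) (use sub ex in fastforce)+
    also have "\<dots> = (\<Sum>n\<le>t. ?h (g + rho n))"
      by (rule sum.reindex_cong[where l="\<lambda>n. g + rho n"]) (auto simp: inj_on_def)
    also have "\<dots> = conv w K g t"
      unfolding conv_def
    proof (rule sum.cong[OF refl])
      fix n assume "n \<in> {..t}"
      then have "(THE i::nat. e = g + rho n - \<sigma> + rho i) = t - n"
        by (intro the_equality) (auto simp: t rho_diff algebra_simps)
      then show "?h (g + rho n) = w n * K (t - n) (g + rho n)" by simp
    qed
    also have "\<dots> = T (g - \<sigma>) (conv w K g) e" using t by simp
    finally show ?thesis .
  next
    case False
    have "?S = {}"
    proof (rule ccontr)
      assume "?S \<noteq> {}"
      then obtain \<beta> i where nz: "T g w \<beta> \<noteq> 0" and i: "e = \<beta> - \<sigma> + rho i" by blast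
      then obtain n where n: "\<beta> = g + rho n" using T_out by blast
      have "e = g - \<sigma> + rho (n + i)" using i n by (simp add: rho_add algebra_simps)
      then show False using False by blast
    qed
    then have "Op \<sigma> K (T g w) e = 0" unfolding Op_def by (simp only: sum.empty)
    moreover have "T (g - \<sigma>) (conv w K g) e = 0" by (rule T_out) (use False in auto)
    ultimately show ?thesis by simp
  qed
qed

lemma conv_delta: "conv w (\<lambda>i \<beta>. if i = 0 then 1 else 0) g = w"
proof
  fix t
  have "conv w (\<lambda>i \<beta>. if i = 0 then 1 else 0) g t = (\<Sum>n\<le>t. if n = t then w n else 0)"
    unfolding conv_def by (rule sum.cong) auto
  then show "conv w (\<lambda>i \<beta>. if i = 0 then 1 else 0) g t = w t" by simp
qed

lemma conv_delta_left: "conv (\<lambda>n. if n = 0 then 1 else 0) K g = (\<lambda>t. K t g)"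
proof
  fix t
  have "conv (\<lambda>n. if n = 0 then 1 else 0) K g t = (\<Sum>n\<le>t. if n = 0 then K (t - n) (g + rho n) else 0)"
    unfolding conv_def by (rule sum.cong) auto
  then show "conv (\<lambda>n. if n = 0 then 1 else 0) K g t = K t g" by simp
qed

lemma conv_conv:
  "conv (conv w K1 g) K2 (g - \<sigma>) = conv w (\<lambda>i \<beta>. \<Sum>j\<le>i. K1 j \<beta> * K2 (i - j) (\<beta> - \<sigma> + rho j)) g"
proof
  fix t
  define F where "F n j = w n * K1 j (g + rho n) * K2 (t - n - j) (g + rho n - \<sigma> + rho j)" for n j
  have "conv (conv w K1 g) K2 (g - \<sigma>) t = (\<Sum>k\<le>t. \<Sum>n\<le>k. F n (k - n))"
    unfolding conv_def sum_distrib_right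
  proof (intro sum.cong refl)
    fix k n assume "k \<in> {..t}" "n \<in> {..k}"
    then have "n \<le> k" "k \<le> t" by auto
    then show "w n * K1 (k - n) (g + rho n) * K2 (t - k) (g - \<sigma> + rho k) = F n (k - n)"
      by (simp add: F_def rho_diff algebra_simps)
  qed
  also have "\<dots> = (\<Sum>(n,j)\<in>{(n,j). n + j \<le> t}. F n j)"
    by (rule sum.triangle_reindex_eq[symmetric])
  also have "\<dots> = (\<Sum>n\<le>t. \<Sum>j\<le>t - n. F n j)"
  proof -
    have "{(n,j). n + j \<le> t} = Sigma {..t} (\<lambda>n. {..t - n})" by auto
    then show ?thesis by (simp add: sum.Sigma)
  qed
  also have "\<dots> = conv w (\<lambda>i \<beta>. \<Sum>j\<le>i. K1 j \<beta> * K2 (i - j) (\<beta> - \<sigma> + rho j)) g t"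
    unfolding conv_def sum_distrib_left
    by (intro sum.cong refl) (simp add: F_def algebra_simps diff_diff_left)
  finally show "conv (conv w K1 g) K2 (g - \<sigma>) t = conv w (\<lambda>i \<beta>. \<Sum>j\<le>i. K1 j \<beta> * K2 (i - j) (\<beta> - \<sigma> + rho j)) g t" .
qed

lemma mono_T: "mono \<beta> = T \<beta> (\<lambda>n. if n = 0 then 1 else 0)"
proof
  fix e
  show "mono \<beta> e = T \<beta> (\<lambda>n. if n = 0 then 1 else 0) e"
  proof (cases e rule: T_cases[of _ \<beta>])
    case (1 n) then show ?thesis by (auto simp: mono_def)
  next
    case 2
    then have "e \<noteq> \<beta>" by (metis add.right_neutral rho_0)
    then show ?thesis using T_out[OF 2] by (simp add: mono_def)
  qed
qed

lemma mulz_T: "mulz (T g w) = T (g + 1) w"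
proof -
  have *: "(e - 1 = g + rho n) = (e = g + 1 + rho n)" for e n by (auto simp: algebra_simps)
  show ?thesis unfolding mulz_def T_def * ..
qed

lemma T_lin: "(\<lambda>e. T g v e + k * T g w e) = T g (\<lambda>t. v t + k * w t)"
  unfolding T_def by auto

lemma T_scale: "(\<lambda>e. k * T g w e) = T g (\<lambda>t. k * w t)"
  unfolding T_def by auto

lemma T_shift: "T (g + rho m) w = T g (\<lambda>t. if m \<le> t then w (t - m) else 0)"
proof
  fix e
  show "T (g + rho m) w e = T g (\<lambda>t. if m \<le> t then w (t - m) else 0) e"
  proof (cases e rule: T_cases[of _ g])
    case (1 t)
    show ?thesis
    proof (cases "m \<le> t")
      case True
      then have "e = (g + rho m) + rho (t - m)" using 1 by (simp add: rho_diff)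
      then have "T (g + rho m) w e = w (t - m)" by (simp only: T_at)
      moreover have "T g (\<lambda>t. if m \<le> t then w (t - m) else 0) e = w (t - m)"
        using True by (simp only: 1 T_at) simp
      ultimately show ?thesis by simp
    next
      case False
      have "e \<noteq> (g + rho m) + rho n" for n
      proof
        assume "e = g + rho m + rho n"
        then have "rho t = rho (m + n)" using 1 by (simp add: rho_add)
        then show False using False by simp
      qed
      then show ?thesis using 1 False T_out by simp
    qed
  next
    case 2
    have "e \<noteq> (g + rho m) + rho n" for n using 2[of "m + n"] by (simp add: rho_add add.assoc)
    then show ?thesis using T_out 2 by metis
  qed
qed

end



context setting begin

lemma lam_eq: "lam = of_nat (m + r) / of_nat r"
  using r0 by (simp add: lam_def slope_def field_simps)

lemma aa0: "aa 0 \<beta> = 1"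
proof -
  have "rho 0 - lam = - of_nat (m + r) / of_nat r" using r0 by (simp add: lam_eq field_simps)
  then show ?thesis using mpos C f_lead by (simp add: aa_def)
qed

lemma aa_shift: "aa j (\<beta> + 1) = aa j \<beta> + (if j = m then 1 / C else 0)"
  by (simp add: aa_def add_divide_distrib)

lemma Pop_T: "Pop C f (T g w) = T (g - lam) (conv w aa g)"
proof
  fix e
  let ?S = "{x. f x \<noteq> 0 \<and> T g w (e - x) \<noteq> 0}"
  have smul: "smul f (T g w) e = sum (\<lambda>x. f x * T g w (e - x)) ?S" by (simp add: smul_def)
  show "Pop C f (T g w) e = T (g - lam) (conv w aa g) e"
  proof (cases "\<exists>t. e = g - lam + rho t")
    case True
    then obtain t where t: "e = g - lam + rho t" by blast
    have d: "ddz (T g w) e = (if m \<le> t then (g + rho (t - m)) * w (t - m) else 0)"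
    proof (cases "m \<le> t")
      case True
      then have "e + 1 = g + rho (t - m)" by (simp add: t lam_rho rho_diff)
      then show ?thesis using True by (simp add: ddz_def)
    next
      case False
      have "e + 1 \<noteq> g + rho n" for n
      proof
        assume "e + 1 = g + rho n"
        then have "rho t = rho (m + n)" by (simp add: t lam_rho rho_add algebra_simps)
        then show False using False by simp
      qed
      then show ?thesis using False T_out by (simp add: ddz_def)
    qed
    have sub: "?S \<subseteq> (\<lambda>n. e - g - rho n) ` {..t}"
    proof
      fix x assume "x \<in> ?S"
      then have fx: "f x \<noteq> 0" and Tx: "T g w (e - x) \<noteq> 0" by auto
      obtain n where n: "e - x = g + rho n" using Tx T_out by blast
      obtain i :: int where i: "i \<ge> - int (m + r)" "x = of_int i / of_nat r" using f_low[OF fx] by blast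
      have "(of_int i :: 'k) = of_nat t - of_nat n - of_nat (m + r)"
        using n t i(2) r0 by (simp add: lam_eq rho_def field_simps)
      then have "(of_int i :: 'k) = of_int (int t - int n - int (m + r))" by simp
      then have "i = int t - int n - int (m + r)" by (simp only: of_int_eq_iff)
      then have "n \<le> t" using i(1) by simp
      moreover have "x = e - g - rho n" using n by (simp add: algebra_simps)
      ultimately show "x \<in> (\<lambda>n. e - g - rho n) ` {..t}" by auto
    qed
    have "smul f (T g w) e = sum (\<lambda>x. f x * T g w (e - x)) ((\<lambda>n. e - g - rho n) ` {..t})"
      unfolding smul by (rule sum.mono_neutral_left) (use sub in auto)
    also have "\<dots> = (\<Sum>n\<le>t. f (e - g - rho n) * T g w (e - (e - g - rho n)))"
      by (rule sum.reindex_cong[where l="\<lambda>n. e - g - rho n"]) (auto simp: inj_on_def)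
    also have "\<dots> = (\<Sum>n\<le>t. w n * f (rho (t - n) - lam))"
      by (rule sum.cong) (auto simp: t rho_diff algebra_simps)
    finally have s: "smul f (T g w) e = (\<Sum>n\<le>t. w n * f (rho (t - n) - lam))" .
    have c1: "(\<Sum>n\<le>t. w n * (if t - n = m then g + rho n else 0)) = (if m \<le> t then (g + rho (t - m)) * w (t - m) else 0)"
    proof (cases "m \<le> t")
      case True
      have "(\<Sum>n\<le>t. w n * (if t - n = m then g + rho n else 0)) = (\<Sum>n\<le>t. if n = t - m then w (t - m) * (g + rho (t - m)) else 0)"
        by (rule sum.cong) (use True in auto)
      then show ?thesis using True by (simp add: mult.commute)
    next
      case False
      then show ?thesis by (intro trans[OF sum.neutral]) auto
    qed
    have "conv w aa g t = ((\<Sum>n\<le>t. w n * (if t - n = m then g + rho n else 0)) + (\<Sum>n\<le>t. w n * f (rho (t - n) - lam))) / C"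
      unfolding conv_def aa_def by (simp add: sum_divide_distrib sum.distrib[symmetric] algebra_simps add_divide_distrib)
    also have "\<dots> = Pop C f (T g w) e"
      by (simp add: Pop_def dop_def d s c1)
    finally show ?thesis using t by simp
  next
    case False
    have d: "ddz (T g w) e = 0"
    proof -
      have "e + 1 \<noteq> g + rho n" for n
      proof
        assume "e + 1 = g + rho n"
        then have "e = g - lam + rho (n + m)" by (simp add: lam_rho rho_add algebra_simps)
        then show False using False by blast
      qed
      then show ?thesis using T_out by (simp add: ddz_def)
    qed
    have "?S = {}"
    proof (rule ccontr)
      assume "?S \<noteq> {}"
      then obtain x where fx: "f x \<noteq> 0" and Tx: "T g w (e - x) \<noteq> 0" by auto
      obtain n where n: "e - x = g + rho n" using Tx T_out by blast
      obtain i :: int where i: "i \<ge> - int (m + r)" "x = of_int i / of_nat r" using f_low[OF fx] by blast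
      define k where "k = nat (int n + i + int (m + r))"
      have kk: "(of_nat k :: 'k) = of_nat n + of_int i + of_nat (m + r)"
        using i(1) unfolding k_def by (simp add: of_nat_nat)
      have "rho k = rho n + of_int i / of_nat r + lam" by (simp add: rho_def kk lam_eq add_divide_distrib)
      moreover have "e = g + rho n + x" using n by (simp add: algebra_simps)
      ultimately have "e = g - lam + rho k" using i(2) by simp
      then show False using False by blast
    qed
    then have "smul f (T g w) e = 0" unfolding smul by (simp only: sum.empty)
    then have "Pop C f (T g w) e = 0" by (simp add: Pop_def dop_def d)
    moreover have "T (g - lam) (conv w aa g) e = 0" by (rule T_out) (use False in auto)
    ultimately show ?thesis by simp
  qed
qed

lemma space_T:
  assumes "c \<in> space r \<gamma>"
  shows "\<exists>j::int. c = T (\<gamma> + of_int j / of_nat r) (\<lambda>n. c (\<gamma> + of_int j / of_nat r + rho n))"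
proof -
  obtain N :: int where N: "\<And>e. c e \<noteq> 0 \<Longrightarrow> \<exists>i::int. i \<ge> - N \<and> e = \<gamma> + of_int i / of_nat r"
    using assms unfolding space_def in_space_def by blast
  define M where "M = max N 0"
  define g where "g = \<gamma> + of_int (- M) / of_nat r"
  have "c = T g (\<lambda>n. c (g + rho n))"
  proof
    fix e
    show "c e = T g (\<lambda>n. c (g + rho n)) e"
    proof (cases e rule: T_cases[of _ g])
      case (1 n) then show ?thesis by simp
    next
      case 2
      have "c e = 0"
      proof (rule ccontr)
        assume "c e \<noteq> 0"
        then obtain i where i: "i \<ge> - N" "e = \<gamma> + of_int i / of_nat r" using N by blast
        have "(of_nat (nat (i + M)) :: 'k) = of_int i + of_int M" using i(1) by (simp add: M_def of_nat_nat)
        then have "rho (nat (i + M)) = (of_int i + of_int M) / of_nat r" by (simp add: rho_def)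
        then have "e = g + rho (nat (i + M))" using i(2) by (simp add: g_def add_divide_distrib)
        then show False using 2 by blast
      qed
      then show ?thesis using T_out[OF 2] by simp
    qed
  qed
  then show ?thesis unfolding g_def by blast
qed

lemma T_space: "T (\<gamma> + of_int j / of_nat r) w \<in> space r \<gamma>"
proof -
  have "\<exists>i::int. i \<ge> - (- j) \<and> e = \<gamma> + of_int i / of_nat r" if nz: "T (\<gamma> + of_int j / of_nat r) w e \<noteq> 0" for e
  proof -
    obtain n where n: "e = \<gamma> + of_int j / of_nat r + rho n" using nz T_out by blast
    show ?thesis
      by (rule exI[of _ "j + int n"]) (simp add: n rho_def add_divide_distrib)
  qed
  then show ?thesis unfolding space_def in_space_def by blast
qed

fun pn :: "nat \<Rightarrow> nat \<Rightarrow> 'k \<Rightarrow> 'k" where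
  "pn i 0 \<beta> = (if i = 0 then 1 else 0)"
| "pn i (Suc n) \<beta> = (\<Sum>j\<le>i. pn j n \<beta> * aa (i - j) (\<beta> - lam * of_nat n + rho j))"

lemma Popn_T: "(Pop C f ^^ n) (T g w) = T (g - lam * of_nat n) (conv w (\<lambda>i \<beta>. pn i n \<beta>) g)"
proof (induction n arbitrary: g w)
  case 0 then show ?case by (simp add: conv_delta)
next
  case (Suc n)
  have "(Pop C f ^^ Suc n) (T g w) = Pop C f (T (g - lam * of_nat n) (conv w (\<lambda>i \<beta>. pn i n \<beta>) g))"
    using Suc by simp
  also have "\<dots> = T (g - lam * of_nat n - lam) (conv (conv w (\<lambda>i \<beta>. pn i n \<beta>) g) aa (g - lam * of_nat n))"
    by (rule Pop_T)
  also have "\<dots> = T (g - lam * of_nat (Suc n)) (conv w (\<lambda>i \<beta>. pn i (Suc n) \<beta>) g)"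
    by (simp add: conv_conv algebra_simps)
  finally show ?case .
qed

lemma Ncomp: "(\<Sum>j\<le>i. pn j a \<beta> * pn (i - j) b (\<beta> - lam * of_nat a + rho j)) = pn i (a + b) \<beta>"
proof -
  let ?d = "\<lambda>n::nat. if n = 0 then 1 else (0::'k)"
  have "(Pop C f ^^ (b + a)) (T \<beta> ?d) = (Pop C f ^^ b) ((Pop C f ^^ a) (T \<beta> ?d))"
    by (simp add: funpow_add)
  also have "\<dots> = T (\<beta> - lam * of_nat a - lam * of_nat b) (conv (conv ?d (\<lambda>i \<beta>. pn i a \<beta>) \<beta>) (\<lambda>i \<beta>. pn i b \<beta>) (\<beta> - lam * of_nat a))"
    by (simp only: Popn_T)
  also have "\<dots> = T (\<beta> - lam * of_nat (b + a)) (\<lambda>t. \<Sum>j\<le>t. pn j a \<beta> * pn (t - j) b (\<beta> - lam * of_nat a + rho j))"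
    by (simp only: conv_conv) (simp add: conv_delta_left algebra_simps)
  finally have "T (\<beta> - lam * of_nat (b + a)) (\<lambda>t. pn t (b + a) \<beta>) = T (\<beta> - lam * of_nat (b + a)) (\<lambda>t. \<Sum>j\<le>t. pn j a \<beta> * pn (t - j) b (\<beta> - lam * of_nat a + rho j))"
    by (simp add: Popn_T conv_delta_left)
  from T_eqD[OF this, of i] show ?thesis by (simp add: add.commute)
qed

lemma pn1: "pn i 1 \<beta> = aa i \<beta>"
proof -
  have "pn i 1 \<beta> = (\<Sum>j\<le>i. (if j = 0 then 1 else 0) * aa (i - j) (\<beta> - lam * 0 + rho j))"
    by simp
  also have "\<dots> = (\<Sum>j\<le>i. if j = 0 then aa (i - j) (\<beta> + rho j) else 0)"
    by (rule sum.cong) auto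
  finally show ?thesis by simp
qed

lemma pn_alt: "pn i (Suc k) \<beta> = (\<Sum>j\<le>i. aa j \<beta> * pn (i - j) k (\<beta> - lam + rho j))"
proof -
  from Ncomp[where a=1 and b=k and i=i and \<beta>=\<beta>]
  have "(\<Sum>j\<le>i. aa j \<beta> * pn (i - j) k (\<beta> - lam + rho j)) = pn i (1 + k) \<beta>"
    by (simp only: pn1 of_nat_1 mult_1_right)
  then show ?thesis unfolding plus_1_eq_Suc by (rule sym)
qed

lemma sum_if_le: "(\<Sum>j\<le>i. if m \<le> i - j then Z j else 0) = (if m \<le> i then (\<Sum>j\<le>i - m. Z j) else (0::'k))"
proof (cases "m \<le> i")
  case True
  have "(\<Sum>j\<le>i. if m \<le> i - j then Z j else 0) = (\<Sum>j\<in>{j\<in>{..i}. m \<le> i - j}. Z j)"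
    by (subst sum.inter_filter) auto
  also have "{j\<in>{..i}. m \<le> i - j} = {..i - m}" using True by auto
  finally show ?thesis using True by simp
next
  case False then show ?thesis by (intro trans[OF sum.neutral]) auto
qed

lemma Nz: "pn i k (\<beta> + 1) = pn i k \<beta> + of_nat k / C * (if m \<le> i then pn (i - m) (k - 1) \<beta> else 0)"
proof (induction k arbitrary: i \<beta>)
  case 0 then show ?case by simp
next
  case (Suc k)
  let ?b = "\<lambda>j. \<beta> - lam + rho j"
  have "pn i (Suc k) (\<beta> + 1) = (\<Sum>j\<le>i. (aa j \<beta> + (if j = m then 1 / C else 0)) * pn (i - j) k (?b j + 1))"
    by (simp only: pn_alt aa_shift) (simp add: algebra_simps)
  also have "\<dots> = (\<Sum>j\<le>i. aa j \<beta> * pn (i - j) k (?b j + 1)) + (if m \<le> i then 1 / C * pn (i - m) k (?b m + 1) else 0)"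
  proof -
    have "(\<Sum>j\<le>i. (if j = m then 1 / C else 0) * pn (i - j) k (?b j + 1)) = (\<Sum>j\<le>i. if j = m then 1 / C * pn (i - m) k (?b m + 1) else 0)"
      by (rule sum.cong) auto
    also have "\<dots> = (if m \<le> i then 1 / C * pn (i - m) k (?b m + 1) else 0)"
      by (subst sum.delta) auto
    finally show ?thesis by (simp only: distrib_right sum.distrib)
  qed
  also have "?b m + 1 = \<beta>" by (simp add: lam_rho)
  also have "(\<Sum>j\<le>i. aa j \<beta> * pn (i - j) k (?b j + 1)) = (\<Sum>j\<le>i. aa j \<beta> * pn (i - j) k (?b j)) + of_nat k / C * (\<Sum>j\<le>i. if m \<le> i - j then aa j \<beta> * pn (i - j - m) (k - 1) (?b j) else 0)"
  proof -
    have "aa j \<beta> * pn (i - j) k (?b j + 1) = aa j \<beta> * pn (i - j) k (?b j) + of_nat k / C * (if m \<le> i - j then aa j \<beta> * pn (i - j - m) (k - 1) (?b j) else 0)" for j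
      by (simp only: Suc.IH) (simp add: algebra_simps)
    then show ?thesis by (simp only: sum.distrib sum_distrib_left)
  qed
  also have "(\<Sum>j\<le>i. aa j \<beta> * pn (i - j) k (?b j)) = pn i (Suc k) \<beta>" by (rule pn_alt[symmetric])
  also have "of_nat k / C * (\<Sum>j\<le>i. if m \<le> i - j then aa j \<beta> * pn (i - j - m) (k - 1) (?b j) else 0) = of_nat k / C * (if m \<le> i then pn (i - m) k \<beta> else 0)"
  proof (cases k)
    case 0 then show ?thesis by simp
  next
    case (Suc k')
    have h: "(\<Sum>j\<le>i - m. aa j \<beta> * pn (i - m - j) (k - 1) (?b j)) = pn (i - m) k \<beta>"
      unfolding Suc diff_Suc_1 by (rule pn_alt[symmetric])
    have h2: "(\<Sum>j\<le>i - m. aa j \<beta> * pn (i - j - m) (k - 1) (?b j)) = (\<Sum>j\<le>i - m. aa j \<beta> * pn (i - m - j) (k - 1) (?b j))"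
      by (rule sum.cong) (auto simp: diff_diff_left add.commute)
    show ?thesis unfolding sum_if_le h2 h ..
  qed
  finally show ?case by (simp add: algebra_simps add_divide_distrib)
qed

lemma bp_aa: "bp G \<Longrightarrow> bp (\<lambda>a b. aa k (G a b))"
  unfolding aa_def by (intro bp_divide bp_add bp_if bp_const) auto

lemma pn_rec: "pn i n \<beta> = (if i = 0 then 1 else 0) + (\<Sum>k<n. \<Sum>j<i. pn j k \<beta> * aa (i - j) (\<beta> - lam * of_nat k + rho j))"
proof (induction n)
  case 0 then show ?case by simp
next
  case (Suc n)
  have "{..i} = insert i {..<i}" by auto
  then have "pn i (Suc n) \<beta> = pn i n \<beta> + (\<Sum>j<i. pn j n \<beta> * aa (i - j) (\<beta> - lam * of_nat n + rho j))"
    by (simp add: aa0)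
  then show ?case using Suc by simp
qed

lemma pn_poly: "\<exists>F. bp F \<and> (\<forall>n \<beta>. F (of_nat n) \<beta> = pn i n \<beta>)"
proof (induction i rule: less_induct)
  case (less i)
  define Fs where "Fs j = (SOME F. bp F \<and> (\<forall>n \<beta>. F (of_nat n) \<beta> = pn j n \<beta>))" for j
  have Fs: "bp (Fs j)" "\<And>n \<beta>. Fs j (of_nat n) \<beta> = pn j n \<beta>" if "j < i" for j
    using someI_ex[OF less[OF that]] unfolding Fs_def by blast+
  define g where "g a b = (\<Sum>j<i. Fs j a b * aa (i - j) (b - lam * a + rho j))" for a b
  have "bp g" unfolding g_def
    by (intro bp_sum bp_mult bp_aa bp_diff bp_add bp_const bp_snd bp_fst) (auto simp: Fs)
  then obtain G where G: "bp G" "\<And>n b. G (of_nat n) b = (\<Sum>k<n. g (of_nat k) b)"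
    using bp_antider by blast
  show ?case
  proof (intro exI[of _ "\<lambda>a b. (if i = 0 then 1 else 0) + G a b"] conjI allI)
    show "bp (\<lambda>a b. (if i = 0 then 1 else 0) + G a b)" by (intro bp_add bp_const G(1))
    fix n \<beta>
    show "(if i = 0 then 1 else 0) + G (of_nat n) \<beta> = pn i n \<beta>"
      by (simp add: G(2) g_def pn_rec[of i n] Fs)
  qed
qed

definition E :: "nat \<Rightarrow> 'k \<Rightarrow> 'k \<Rightarrow> 'k" where
  "E i = (SOME F. bp F \<and> (\<forall>n \<beta>. F (of_nat n) \<beta> = pn i n \<beta>))"

lemma E_bp: "bp (E i)" and E_nat: "E i (of_nat n) \<beta> = pn i n \<beta>"
  using someI_ex[OF pn_poly[of i]] unfolding E_def by blast+

lemma pnat_pn: "pnat r m C f i n \<beta> = pn i n \<beta>"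
proof -
  have "(Pop C f ^^ n) (mono \<beta>) = T (\<beta> - lam * of_nat n) (\<lambda>t. pn t n \<beta>)"
    by (simp add: mono_T Popn_T conv_delta_left)
  moreover have "\<beta> - (1 + slope r m) * of_nat n + of_nat i / of_nat r = (\<beta> - lam * of_nat n) + rho i"
    by (simp add: lam_def rho_def)
  ultimately show ?thesis unfolding pnat_def by (simp only: T_at)
qed

lemma pcoef_E: "pcoef r m C f i \<alpha> \<beta> = E i \<alpha> \<beta>"
proof -
  obtain q where q: "\<And>a. E i a \<beta> = poly q a" using bp_uni_a[OF E_bp] by blast
  have "(THE q'. \<forall>n::nat. poly q' (of_nat n) = pnat r m C f i n \<beta>) = q"
  proof (rule the_equality)
    show "\<forall>n. poly q (of_nat n) = pnat r m C f i n \<beta>" by (simp add: pnat_pn q[symmetric] E_nat)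
  next
    fix q' assume "\<forall>n::nat. poly q' (of_nat n) = pnat r m C f i n \<beta>"
    then have "\<And>n. poly (q' - q) (of_nat n) = 0" by (simp add: pnat_pn q[symmetric] E_nat)
    then show "q' = q" using upoly_zero by fastforce
  qed
  then show ?thesis unfolding pcoef_def by (simp add: q)
qed

end



context setting begin

lemma bp_E: "bp G1 \<Longrightarrow> bp G2 \<Longrightarrow> bp (\<lambda>a b. E j (G1 a b) (G2 a b))"
  by (rule bp_subst[OF E_bp])

lemma E0: "E i 0 \<beta> = (if i = 0 then 1 else 0)"
  using E_nat[of i 0 \<beta>] by simp

lemma E1: "E i 1 \<beta> = aa i \<beta>"
  by (metis E_nat of_nat_1 pn1)

lemma Ecomp: "(\<Sum>j\<le>i. E j a \<beta> * E (i - j) b (\<beta> - lam * a + rho j)) = E i (a + b) \<beta>"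
proof -
  define F where "F = (\<lambda>a b. \<Sum>j\<le>i. E j a \<beta> * E (i - j) b (\<beta> - lam * a + rho j))"
  define G where "G = (\<lambda>a b. E i (a + b) \<beta>)"
  have "F a b = G a b"
  proof (rule bp_eq[of F G])
    show "bp F" unfolding F_def
      by (intro bp_sum bp_mult bp_E bp_add bp_diff bp_const bp_fst bp_snd) auto
    show "bp G" unfolding G_def
      by (intro bp_E bp_add bp_const bp_fst bp_snd)
    fix n k :: nat
    show "F (of_nat n) (of_nat k) = G (of_nat n) (of_nat k)"
      unfolding F_def G_def
      using Ncomp[where i=i and a=n and \<beta>=\<beta> and b=k] E_nat[of i "n + k" \<beta>] by (simp add: E_nat)
  qed
  then show ?thesis by (simp add: F_def G_def)
qed

lemma Ez: "E i a (\<beta> + 1) = E i a \<beta> + a / C * (if m \<le> i then E (i - m) (a - 1) \<beta> else 0)"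
proof -
  define F where "F = (\<lambda>a (b::'k). E i a (\<beta> + 1))"
  define G where "G = (\<lambda>a (b::'k). E i a \<beta> + a / C * (if m \<le> i then E (i - m) (a - 1) \<beta> else 0))"
  have "F a 0 = G a 0"
  proof (rule bp_eq[of F G])
    show "bp F" unfolding F_def
      by (intro bp_E bp_add bp_const bp_fst bp_snd)
    show "bp G" unfolding G_def
      by (intro bp_E bp_add bp_mult bp_divide bp_if bp_diff bp_const bp_fst bp_snd)
    fix n k :: nat
    show "F (of_nat n) (of_nat k) = G (of_nat n) (of_nat k)"
      unfolding F_def G_def
    proof (cases n)
      case 0 then show "E i (of_nat n) (\<beta> + 1) = E i (of_nat n) \<beta> + of_nat n / C * (if m \<le> i then E (i - m) (of_nat n - 1) \<beta> else 0)"
        by (simp add: E0)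
    next
      case (Suc n')
      have e: "(of_nat n :: 'k) - 1 = of_nat n'" using Suc by simp
      show "E i (of_nat n) (\<beta> + 1) = E i (of_nat n) \<beta> + of_nat n / C * (if m \<le> i then E (i - m) (of_nat n - 1) \<beta> else 0)"
        unfolding e E_nat Nz[of i n \<beta>] by (simp only: Suc diff_Suc_1)
    qed
  qed
  then show ?thesis by (simp add: F_def G_def)
qed

lemma Ppow_Op: "Ppow r m C f \<alpha> c = Op (lam * \<alpha>) (\<lambda>i \<beta>. E i \<alpha> \<beta>) c"
  unfolding Ppow_def Op_def lam_def rho_def pcoef_E ..

lemma PPT: "Ppow r m C f \<alpha> (T g w) = T (g - lam * \<alpha>) (conv w (\<lambda>i \<beta>. E i \<alpha> \<beta>) g)"
  by (simp only: Ppow_Op Op_T)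

lemma dop_T: "dop f (T g w) = T (g - lam) (conv w (\<lambda>i \<beta>. C * E i 1 \<beta>) g)"
proof -
  have "dop f (T g w) = (\<lambda>e. C * Pop C f (T g w) e)"
    using C by (simp add: Pop_def)
  also have "\<dots> = T (g - lam) (\<lambda>t. C * conv w aa g t)"
    by (simp only: Pop_T T_scale)
  also have "(\<lambda>t. C * conv w aa g t) = conv w (\<lambda>i \<beta>. C * E i 1 \<beta>) g"
    by (simp add: conv_def E1 sum_distrib_left algebra_simps)
  finally show ?thesis .
qed

theorem main:
  "\<forall>\<alpha> \<gamma>::'k. \<forall>c \<in> space r \<gamma>.
      Ppow r m C f \<alpha> c \<in> space r (\<gamma> - (1 + slope r m) * \<alpha>)
    \<and> Ppow r m C f (- \<alpha>) (Ppow r m C f \<alpha> c) = c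
    \<and> Ppow r m C f \<alpha> (Ppow r m C f (- \<alpha>) c) = c
    \<and> Ppow r m C f \<alpha> (dop f c) = dop f (Ppow r m C f \<alpha> c)
    \<and> Ppow r m C f \<alpha> (mulz c) =
        (\<lambda>e. mulz (Ppow r m C f \<alpha> c) e + \<alpha> / C * Ppow r m C f (\<alpha> - 1) c e)"
proof (intro allI ballI)
  fix \<alpha> \<gamma> :: 'k and c assume cs: "c \<in> space r \<gamma>"
  obtain j :: int where cj: "c = T (\<gamma> + of_int j / of_nat r) (\<lambda>n. c (\<gamma> + of_int j / of_nat r + rho n))"
    using space_T[OF cs] by blast
  define g where "g = \<gamma> + of_int j / of_nat r"
  define w where "w = (\<lambda>n. c (\<gamma> + of_int j / of_nat r + rho n))"
  have c: "c = T g w" using cj unfolding g_def w_def .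
  have P0: "Ppow r m C f \<alpha> c \<in> space r (\<gamma> - (1 + slope r m) * \<alpha>)"
  proof -
    have "g - lam * \<alpha> = (\<gamma> - (1 + slope r m) * \<alpha>) + of_int j / of_nat r"
      by (simp add: g_def lam_def algebra_simps)
    then show ?thesis unfolding c PPT by (simp only: T_space)
  qed
  have P1: "Ppow r m C f (- \<alpha>) (Ppow r m C f \<alpha> c) = c"
    unfolding c by (simp only: PPT conv_conv Ecomp) (simp add: E0 conv_delta)
  have P2: "Ppow r m C f \<alpha> (Ppow r m C f (- \<alpha>) c) = c"
    unfolding c by (simp only: PPT conv_conv Ecomp) (simp add: E0 conv_delta)
  have K: "\<And>i \<beta>. (\<Sum>j\<le>i. C * E j 1 \<beta> * E (i - j) \<alpha> (\<beta> - lam + rho j)) = C * E i (1 + \<alpha>) \<beta>"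
    using Ecomp[where a=1 and b=\<alpha>] by (simp add: sum_distrib_left[symmetric] mult.assoc)
  have K': "\<And>i \<beta>. (\<Sum>j\<le>i. E j \<alpha> \<beta> * (C * E (i - j) 1 (\<beta> - lam * \<alpha> + rho j))) = C * E i (\<alpha> + 1) \<beta>"
    using Ecomp[where a=\<alpha> and b=1] by (simp add: sum_distrib_left[symmetric] algebra_simps)
  have P3: "Ppow r m C f \<alpha> (dop f c) = dop f (Ppow r m C f \<alpha> c)"
    unfolding c by (simp only: PPT dop_T conv_conv K K') (simp add: algebra_simps)
  have P4: "Ppow r m C f \<alpha> (mulz c) = (\<lambda>e. mulz (Ppow r m C f \<alpha> c) e + \<alpha> / C * Ppow r m C f (\<alpha> - 1) c e)"
  proof -
    let ?G = "g - lam * \<alpha> + 1"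
    have b1: "g + 1 - lam * \<alpha> = ?G" by simp
    have b2: "g - lam * (\<alpha> - 1) = ?G + rho m" by (simp add: lam_rho algebra_simps)
    have L: "Ppow r m C f \<alpha> (mulz c) = T ?G (conv w (\<lambda>i \<beta>. E i \<alpha> \<beta>) (g + 1))"
      unfolding c mulz_T PPT b1 ..
    have R: "(\<lambda>e. mulz (Ppow r m C f \<alpha> c) e + \<alpha> / C * Ppow r m C f (\<alpha> - 1) c e)
      = T ?G (\<lambda>t. conv w (\<lambda>i \<beta>. E i \<alpha> \<beta>) g t + \<alpha> / C * (if m \<le> t then conv w (\<lambda>i \<beta>. E i (\<alpha> - 1) \<beta>) g (t - m) else 0))"
      unfolding c PPT mulz_T b2 T_shift T_lin ..
    have S: "conv w (\<lambda>i \<beta>. E i \<alpha> \<beta>) (g + 1) t = conv w (\<lambda>i \<beta>. E i \<alpha> \<beta>) g t + \<alpha> / C * (if m \<le> t then conv w (\<lambda>i \<beta>. E i (\<alpha> - 1) \<beta>) g (t - m) else 0)" for t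
    proof -
      have "conv w (\<lambda>i \<beta>. E i \<alpha> \<beta>) (g + 1) t = (\<Sum>n\<le>t. w n * E (t - n) \<alpha> ((g + rho n) + 1))"
        unfolding conv_def by (simp add: algebra_simps)
      also have "\<dots> = conv w (\<lambda>i \<beta>. E i \<alpha> \<beta>) g t + \<alpha> / C * (\<Sum>n\<le>t. if m \<le> t - n then w n * E (t - n - m) (\<alpha> - 1) (g + rho n) else 0)"
      proof -
        have "w n * E (t - n) \<alpha> ((g + rho n) + 1) = w n * E (t - n) \<alpha> (g + rho n) + \<alpha> / C * (if m \<le> t - n then w n * E (t - n - m) (\<alpha> - 1) (g + rho n) else 0)" for n
          by (simp only: Ez) (simp add: algebra_simps)
        then show ?thesis by (simp only: conv_def sum.distrib sum_distrib_left)
      qed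
      also have "(\<Sum>n\<le>t. if m \<le> t - n then w n * E (t - n - m) (\<alpha> - 1) (g + rho n) else 0)
          = (if m \<le> t then conv w (\<lambda>i \<beta>. E i (\<alpha> - 1) \<beta>) g (t - m) else 0)"
        unfolding sum_if_le conv_def by (auto intro!: sum.cong simp: diff_diff_left add.commute)
      finally show ?thesis .
    qed
    show ?thesis unfolding L R by (rule T_eqI) (rule S)
  qed
  show "Ppow r m C f \<alpha> c \<in> space r (\<gamma> - (1 + slope r m) * \<alpha>)
    \<and> Ppow r m C f (- \<alpha>) (Ppow r m C f \<alpha> c) = c
    \<and> Ppow r m C f \<alpha> (Ppow r m C f (- \<alpha>) c) = c
    \<and> Ppow r m C f \<alpha> (dop f c) = dop f (Ppow r m C f \<alpha> c)
    \<and> Ppow r m C f \<alpha> (mulz c) =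
        (\<lambda>e. mulz (Ppow r m C f \<alpha> c) e + \<alpha> / C * Ppow r m C f (\<alpha> - 1) c e)"
    using P0 P1 P2 P3 P4 by blast
qed

end

theorem proposition7p3:
  fixes r m :: nat and C :: "'k::{alg_closed_field, field_char_0}"
    and f :: "'k \<Rightarrow> 'k"
  assumes r: "r > 0"
    and slope_pos: "m > 0"
    and f_space: "f \<in> space r 0"
    and f_lead: "f (- of_nat (m + r) / of_nat r) = C"
    and f_low: "\<And>e. f e \<noteq> 0 \<Longrightarrow> \<exists>i::int. i \<ge> - int (m + r) \<and> e = of_int i / of_nat r"
    and C: "C \<noteq> 0"
    and irred: "irreducible_DK r f"
  shows "\<forall>\<alpha> \<gamma>::'k. \<forall>c \<in> space r \<gamma>.
      Ppow r m C f \<alpha> c \<in> space r (\<gamma> - (1 + slope r m) * \<alpha>)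
    \<and> Ppow r m C f (- \<alpha>) (Ppow r m C f \<alpha> c) = c
    \<and> Ppow r m C f \<alpha> (Ppow r m C f (- \<alpha>) c) = c
    \<and> Ppow r m C f \<alpha> (dop f c) = dop f (Ppow r m C f \<alpha> c)
    \<and> Ppow r m C f \<alpha> (mulz c) =
        (\<lambda>e. mulz (Ppow r m C f \<alpha> c) e + \<alpha> / C * Ppow r m C f (\<alpha> - 1) c e)"
proof -
  interpret setting r m C f using r slope_pos f_lead f_low C by unfold_locales
  show ?thesis by (rule main)
qed

end
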